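(* Let $\mathfrak{A}$ be a $(\circ,\wedge,\mathsf{A})$-algebra that is representable by partial functions. If $\mathfrak{A}$ is atomic, then it is atomistic: every $a\in\mathfrak{A}$ is the join (in $\mathfrak{A}$) of the set of atoms $x$ with $x\le a$.
   Context: A $(\circ,\wedge,\mathsf{A})$-algebra is a set with two binary operations $\circ,\wedge$ and one unary operation $\mathsf{A}$. An algebra of partial functions of this signature is a set of partial functions, with base $X$ the union of all their domains and ranges, closed under: composition $f\circ g=\{(x,z)\mid \exists y\,(x,y)\in f,(y,z)\in g\}$; intersection; antidomain $\mathsf{A}(f)=\{(x,x)\mid x\in X, x\notin\mathrm{dom}(f)\}$. A representation by partial functions is an isomorphism onto such an algebra. The order is $a\le b\iff a\wedge b=a$, with least element $0=\mathsf{A}(a)\circ a$. An atom is a minimal nonzero element; $\mathfrak{A}$ is atomic if every nonzero element is above an atom. *)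

theory Defs
  imports Main
begin

text \<open>Partial functions on a base type 'b are modelled as functional relations.
  Composition f \<circ> g of the paper (first f, then g) is relational composition f O g.\<close>

definition pfun :: "('b \<times> 'b) set \<Rightarrow> bool" where
  "pfun f \<longleftrightarrow> (\<forall>x y z. (x, y) \<in> f \<longrightarrow> (x, z) \<in> f \<longrightarrow> y = z)"

definition pf_base :: "('b \<times> 'b) set set \<Rightarrow> 'b set" where
  "pf_base F = (\<Union>f\<in>F. Domain f \<union> Range f)"

definition is_algebra :: "'a set \<Rightarrow> ('a \<Rightarrow> 'a \<Rightarrow> 'a) \<Rightarrow> ('a \<Rightarrow> 'a \<Rightarrow> 'a) \<Rightarrow> ('a \<Rightarrow> 'a) \<Rightarrow> bool" where
  "is_algebra S cmp meet ant \<longleftrightarrow>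
     (\<forall>a\<in>S. \<forall>b\<in>S. cmp a b \<in> S \<and> meet a b \<in> S) \<and> (\<forall>a\<in>S. ant a \<in> S)"

definition is_pf_representation ::
  "'a set \<Rightarrow> ('a \<Rightarrow> 'a \<Rightarrow> 'a) \<Rightarrow> ('a \<Rightarrow> 'a \<Rightarrow> 'a) \<Rightarrow> ('a \<Rightarrow> 'a) \<Rightarrow> ('a \<Rightarrow> ('b \<times> 'b) set) \<Rightarrow> bool" where
  "is_pf_representation S cmp meet ant h \<longleftrightarrow>
     inj_on h S \<and> (\<forall>a\<in>S. pfun (h a)) \<and>
     (\<forall>a\<in>S. \<forall>b\<in>S. h (cmp a b) = h a O h b) \<and>
     (\<forall>a\<in>S. \<forall>b\<in>S. h (meet a b) = h a \<inter> h b) \<and>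
     (\<forall>a\<in>S. h (ant a) = {(x, x) | x. x \<in> pf_base (h ` S) \<and> x \<notin> Domain (h a)})"

definition alg_le :: "('a \<Rightarrow> 'a \<Rightarrow> 'a) \<Rightarrow> 'a \<Rightarrow> 'a \<Rightarrow> bool" where
  "alg_le meet a b \<longleftrightarrow> meet a b = a"

definition is_zero :: "('a \<Rightarrow> 'a \<Rightarrow> 'a) \<Rightarrow> ('a \<Rightarrow> 'a) \<Rightarrow> 'a \<Rightarrow> bool" where
  "is_zero cmp ant x \<longleftrightarrow> x = cmp (ant x) x"

definition is_atom :: "'a set \<Rightarrow> ('a \<Rightarrow> 'a \<Rightarrow> 'a) \<Rightarrow> ('a \<Rightarrow> 'a \<Rightarrow> 'a) \<Rightarrow> ('a \<Rightarrow> 'a) \<Rightarrow> 'a \<Rightarrow> bool" where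
  "is_atom S cmp meet ant x \<longleftrightarrow> x \<in> S \<and> \<not> is_zero cmp ant x \<and>
     (\<forall>y\<in>S. alg_le meet y x \<and> \<not> is_zero cmp ant y \<longrightarrow> y = x)"

definition is_atomic :: "'a set \<Rightarrow> ('a \<Rightarrow> 'a \<Rightarrow> 'a) \<Rightarrow> ('a \<Rightarrow> 'a \<Rightarrow> 'a) \<Rightarrow> ('a \<Rightarrow> 'a) \<Rightarrow> bool" where
  "is_atomic S cmp meet ant \<longleftrightarrow>
     (\<forall>a\<in>S. \<not> is_zero cmp ant a \<longrightarrow> (\<exists>x. is_atom S cmp meet ant x \<and> alg_le meet x a))"

definition is_join :: "'a set \<Rightarrow> ('a \<Rightarrow> 'a \<Rightarrow> 'a) \<Rightarrow> 'a set \<Rightarrow> 'a \<Rightarrow> bool" where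
  "is_join S meet X a \<longleftrightarrow> a \<in> S \<and> (\<forall>x\<in>X. alg_le meet x a) \<and>
     (\<forall>b\<in>S. (\<forall>x\<in>X. alg_le meet x b) \<longrightarrow> alg_le meet a b)"

definition is_atomistic :: "'a set \<Rightarrow> ('a \<Rightarrow> 'a \<Rightarrow> 'a) \<Rightarrow> ('a \<Rightarrow> 'a \<Rightarrow> 'a) \<Rightarrow> ('a \<Rightarrow> 'a) \<Rightarrow> bool" where
  "is_atomistic S cmp meet ant \<longleftrightarrow>
     (\<forall>a\<in>S. is_join S meet {x. is_atom S cmp meet ant x \<and> alg_le meet x a} a)"

end

theory Submission
  imports Defs
begin

lemma le_iff:
  assumes A: "is_algebra S cmp meet ant" and R: "is_pf_representation S cmp meet ant h"
    and a: "a \<in> S" and b: "b \<in> S"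
  shows "alg_le meet a b \<longleftrightarrow> h a \<subseteq> h b"
proof -
  have m: "meet a b \<in> S" using A a b unfolding is_algebra_def by blast
  have inj: "inj_on h S" and hm: "h (meet a b) = h a \<inter> h b"
    using R a b unfolding is_pf_representation_def by auto
  have "meet a b = a \<longleftrightarrow> h (meet a b) = h a"
    using inj m a by (metis inj_on_eq_iff)
  thus ?thesis unfolding alg_le_def hm by blast
qed

lemma zero_iff:
  assumes A: "is_algebra S cmp meet ant" and R: "is_pf_representation S cmp meet ant h"
    and a: "a \<in> S"
  shows "is_zero cmp ant a \<longleftrightarrow> h a = {}"
proof -
  have an: "ant a \<in> S" using A a unfolding is_algebra_def by blast
  have c: "cmp (ant a) a \<in> S" using A a an unfolding is_algebra_def by blast
  have inj: "inj_on h S" and hc: "h (cmp (ant a) a) = h (ant a) O h a"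
    and ha: "h (ant a) = {(x, x) | x. x \<in> pf_base (h ` S) \<and> x \<notin> Domain (h a)}"
    using R a an unfolding is_pf_representation_def by auto
  have e: "h (ant a) O h a = {}" unfolding ha by blast
  have "a = cmp (ant a) a \<longleftrightarrow> h a = h (cmp (ant a) a)"
    using inj c a by (metis inj_on_eq_iff)
  thus ?thesis unfolding is_zero_def hc e by simp
qed

theorem mainTheorem14:
  fixes S :: "'a set" and cmp meet :: "'a \<Rightarrow> 'a \<Rightarrow> 'a" and ant :: "'a \<Rightarrow> 'a"
    and h :: "'a \<Rightarrow> ('b \<times> 'b) set"
  assumes "is_algebra S cmp meet ant"
    and "is_pf_representation S cmp meet ant h"
    and "is_atomic S cmp meet ant"
  shows "is_atomistic S cmp meet ant"
  unfolding is_atomistic_def is_join_def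
proof (intro ballI)
  note A = assms(1) and R = assms(2)
  fix a assume a: "a \<in> S"
  have "\<forall>b\<in>S. (\<forall>x\<in>{x. is_atom S cmp meet ant x \<and> alg_le meet x a}. alg_le meet x b) \<longrightarrow> alg_le meet a b"
  proof (intro ballI impI)
    fix b assume b: "b \<in> S"
    assume H: "\<forall>x\<in>{x. is_atom S cmp meet ant x \<and> alg_le meet x a}. alg_le meet x b"
    define m where "m = meet a b"
    define d where "d = ant m"
    define c where "c = cmp d a"
    have mS: "m \<in> S" using A a b unfolding is_algebra_def m_def by blast
    have dS: "d \<in> S" using A mS unfolding is_algebra_def d_def by blast
    have cS: "c \<in> S" using A dS a unfolding is_algebra_def c_def by blast
    have hm: "h m = h a \<inter> h b" using R a b unfolding is_pf_representation_def m_def by auto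
    have hd: "h d = {(x, x) | x. x \<in> pf_base (h ` S) \<and> x \<notin> Domain (h m)}"
      using R mS unfolding is_pf_representation_def d_def by auto
    have hc: "h c = h d O h a" using R dS a unfolding is_pf_representation_def c_def by auto
    have pf: "pfun (h a)" using R a unfolding is_pf_representation_def by auto
    have base: "Domain (h a) \<subseteq> pf_base (h ` S)" using a unfolding pf_base_def by blast
    have hc': "h c = {(x,y). (x,y) \<in> h a \<and> x \<notin> Domain (h a \<inter> h b)}"
      unfolding hc hd hm using base by blast
    have disj: "h c \<inter> h b = {}"
    proof -
      { fix x y assume "(x,y) \<in> h c" "(x,y) \<in> h b"
        hence False unfolding hc' by blast }
      thus ?thesis by auto
    qed
    have ca: "h c \<subseteq> h a" unfolding hc' by blast
    show "alg_le meet a b"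
    proof (rule ccontr)
      assume "\<not> alg_le meet a b"
      hence "\<not> h a \<subseteq> h b" using le_iff[OF A R a b] by simp
      then obtain x y where xy: "(x,y) \<in> h a" "(x,y) \<notin> h b" by auto
      have "(x,y) \<in> h c"
      proof -
        { assume "x \<in> Domain (h a \<inter> h b)"
          then obtain z where "(x,z) \<in> h a" "(x,z) \<in> h b" by auto
          with xy pf have False unfolding pfun_def by blast }
        thus ?thesis unfolding hc' using xy by blast
      qed
      hence "\<not> is_zero cmp ant c" using zero_iff[OF A R cS] by auto
      then obtain t where t: "is_atom S cmp meet ant t" "alg_le meet t c"
        using assms(3) cS unfolding is_atomic_def by blast
      have tS: "t \<in> S" using t unfolding is_atom_def by blast
      have tc: "h t \<subseteq> h c" using le_iff[OF A R tS cS] t by simp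
      hence "alg_le meet t a" using le_iff[OF A R tS a] ca by auto
      hence "alg_le meet t b" using H t by blast
      hence "h t \<subseteq> h b" using le_iff[OF A R tS b] by simp
      hence "h t = {}" using tc disj by blast
      thus False using t zero_iff[OF A R tS] unfolding is_atom_def by blast
    qed
  qed
  thus "a \<in> S \<and> (\<forall>x\<in>{x. is_atom S cmp meet ant x \<and> alg_le meet x a}. alg_le meet x a) \<and>
     (\<forall>b\<in>S. (\<forall>x\<in>{x. is_atom S cmp meet ant x \<and> alg_le meet x a}. alg_le meet x b) \<longrightarrow> alg_le meet a b)"
    using a by blast
qed

end
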